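(* Let $\Lambda$ be a block of bounded weights and $\Delta$ the block containing $\mathrm{cl}(\Lambda)$. If $\lambda\in\Delta\setminus\mathrm{cl}(\Lambda)$ and $\mu\ge\lambda$ in the Bruhat order, then $\mu\in\Delta\setminus\mathrm{cl}(\Lambda)$.
   Context: A number line carries vertices indexed by a finite set of consecutive integers here. A (bounded) weight labels each vertex by $\circ,\times,\vee,\wedge$. Bruhat order: generated by declaring that interchanging a $\vee$ with an $\wedge$ to its right makes a weight bigger. A block is an equivalence class of weights under permuting $\vee$'s and $\wedge$'s. For a block $\Lambda$ of bounded weights, each having $p$ labels $\wedge$ and $q$ labels $\vee$, the closure $\mathrm{cl}(\lambda)$ of $\lambda\in\Lambda$ is the weight obtained by adding $p$ new vertices labelled $\vee$ at the left end of the number line and $q$ new vertices labelled $\wedge$ at the right end; $\mathrm{cl}(\Lambda)=\{\mathrm{cl}(\lambda)\mid\lambda\in\Lambda\}$. *)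

theory Defs
  imports "HOL-Combinatorics.Permutations"
begin

text \<open>Labels: Circ = \<circ>, Cross = \<times>, Vee = \<or>, Wedge = \<and>.
  A bounded weight on a number line of consecutive integer vertices is the
  list of its labels read from left to right.\<close>

datatype label = Circ | Cross | Vee | Wedge

type_synonym weight = "label list"

definition same_block :: "weight \<Rightarrow> weight \<Rightarrow> bool" where
  "same_block l m \<longleftrightarrow>
     (\<exists>\<sigma>. \<sigma> permutes {..<length l} \<and>
          (\<forall>i. \<sigma> i \<noteq> i \<longrightarrow> l ! i \<in> {Vee, Wedge}) \<and>
          m = map (\<lambda>i. l ! (\<sigma> i)) [0..<length l])"

definition block_of :: "weight \<Rightarrow> weight set" where
  "block_of l = {m. same_block l m}"

definition is_block :: "weight set \<Rightarrow> bool" where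
  "is_block B \<longleftrightarrow> (\<exists>l. B = block_of l)"

definition bruhat_step :: "weight \<Rightarrow> weight \<Rightarrow> bool" where
  "bruhat_step l m \<longleftrightarrow>
     (\<exists>i j. i < j \<and> j < length l \<and> l ! i = Vee \<and> l ! j = Wedge \<and>
            m = l[i := Wedge, j := Vee])"

definition bruhat_le :: "weight \<Rightarrow> weight \<Rightarrow> bool" where
  "bruhat_le = bruhat_step\<^sup>*\<^sup>*"

definition cl :: "weight \<Rightarrow> weight" where
  "cl l = replicate (count_list l Wedge) Vee @ l @ replicate (count_list l Vee) Wedge"

end

theory Submission
  imports Defs "HOL-Library.Multiset"
begin

lemma sb_refl: "same_block l l"
  unfolding same_block_def
  by (rule exI[of _ id]) (auto intro!: nth_equalityI simp: permutes_id)

lemma sb_trans: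
  assumes "same_block l m" "same_block m k" shows "same_block l k"
proof -
  obtain \<sigma> where s: "\<sigma> permutes {..<length l}" "\<forall>i. \<sigma> i \<noteq> i \<longrightarrow> l ! i \<in> {Vee, Wedge}"
    "m = map (\<lambda>i. l ! (\<sigma> i)) [0..<length l]" using assms(1) unfolding same_block_def by blast
  obtain \<tau> where t: "\<tau> permutes {..<length m}" "\<forall>i. \<tau> i \<noteq> i \<longrightarrow> m ! i \<in> {Vee, Wedge}"
    "k = map (\<lambda>i. m ! (\<tau> i)) [0..<length m]" using assms(2) unfolding same_block_def by blast
  have lm: "length m = length l" using s(3) by simp
  have p: "(\<sigma> \<circ> \<tau>) permutes {..<length l}" using s(1) t(1) lm permutes_compose by metis
  have c: "\<forall>i. (\<sigma> \<circ> \<tau>) i \<noteq> i \<longrightarrow> l ! i \<in> {Vee, Wedge}"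
  proof (intro allI impI)
    fix i assume h: "(\<sigma> \<circ> \<tau>) i \<noteq> i"
    show "l ! i \<in> {Vee, Wedge}"
    proof (cases "\<sigma> i = i")
      case True
      then have "\<tau> i \<noteq> i" using h by auto
      then have "i < length l" using t(1) lm unfolding permutes_def by auto
      moreover have "m ! i \<in> {Vee, Wedge}" using t(2) \<open>\<tau> i \<noteq> i\<close> by blast
      ultimately show ?thesis using s(3) True by simp
    next
      case False then show ?thesis using s(2) by blast
    qed
  qed
  have "\<tau> i < length l" if "i < length l" for i using t(1) lm that permutes_in_image by fastforce
  then have "k = map (\<lambda>i. l ! ((\<sigma> \<circ> \<tau>) i)) [0..<length l]"
    using t(3) s(3) lm by (auto intro!: nth_equalityI)
  then show ?thesis unfolding same_block_def using p c by blast
qed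

lemma swap_sb:
  assumes "i < j" "j < length l" "l ! i \<in> {Vee,Wedge}" "l ! j \<in> {Vee,Wedge}"
  shows "same_block l (l[i := l ! j, j := l ! i])"
  unfolding same_block_def
proof (intro exI conjI)
  show "transpose i j permutes {..<length l}" using assms by (auto intro: permutes_swap_id)
  show "\<forall>k. transpose i j k \<noteq> k \<longrightarrow> l ! k \<in> {Vee, Wedge}"
    using assms by (auto simp: transpose_def)
  show "l[i := l ! j, j := l ! i] = map (\<lambda>k. l ! transpose i j k) [0..<length l]"
    using assms by (auto intro!: nth_equalityI simp: transpose_def nth_list_update)
qed

lemma step_sb: "bruhat_step l m \<Longrightarrow> same_block l m"
  unfolding bruhat_step_def using swap_sb by fastforce

lemma step_sb_rev: assumes "bruhat_step l m" shows "same_block m l"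
proof -
  obtain i j where h: "i < j" "j < length l" "l ! i = Vee" "l ! j = Wedge" "m = l[i := Wedge, j := Vee]"
    using assms unfolding bruhat_step_def by blast
  have "same_block m (m[i := m ! j, j := m ! i])" using h by (intro swap_sb) auto
  moreover have "m[i := m ! j, j := m ! i] = l" using h by (auto intro!: nth_equalityI simp: nth_list_update)
  ultimately show ?thesis by simp
qed

lemma step_count: assumes "bruhat_step l m" shows "count_list m v = count_list l v"
proof -
  obtain i j where h: "i < j" "j < length l" "l ! i = Vee" "l ! j = Wedge" "m = l[i := Wedge, j := Vee]"
    using assms unfolding bruhat_step_def by blast
  have i1: "Vee \<in># mset l" using h by (metis in_set_conv_nth less_trans set_mset_mset)
  have "mset m = mset l" using h by (simp add: mset_update nth_list_update insert_DiffM[OF i1])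
  then show ?thesis by (metis count_mset)
qed

lemma le_sb: "bruhat_le l m \<Longrightarrow> same_block l m"
  unfolding bruhat_le_def
proof (induction rule: rtranclp_induct)
  case base show ?case unfolding same_block_def
    by (rule exI[of _ id]) (auto intro!: nth_equalityI simp: permutes_id)
next
  case (step y z) then show ?case using sb_trans step_sb by blast
qed

lemma chain:
  assumes "bruhat_le a b" "b = replicate p Vee @ y @ replicate q Wedge"
  shows "\<exists>y'. a = replicate p Vee @ y' @ replicate q Wedge \<and> bruhat_le y' y"
  using assms(1) unfolding bruhat_le_def
proof (induction rule: converse_rtranclp_induct)
  case base then show ?case using assms(2) by auto
next
  case (step a c)
  obtain y'' where c: "c = replicate p Vee @ y'' @ replicate q Wedge" "bruhat_step\<^sup>*\<^sup>* y'' y"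
    using step.IH by blast
  obtain i j where h: "i < j" "j < length a" "a ! i = Vee" "a ! j = Wedge" "c = a[i := Wedge, j := Vee]"
    using step.hyps(1) unfolding bruhat_step_def by blast
  have lc: "length c = length a" using h(5) by simp
  have ci: "c ! i = Wedge" "c ! j = Vee" using h by (auto simp: nth_list_update)
  have ip: "i \<ge> p"
  proof (rule ccontr)
    assume "\<not> p \<le> i" then have "c ! i = Vee" using c(1) by (simp add: nth_append)
    then show False using ci by simp
  qed
  have jp: "j < p + length y''"
  proof (rule ccontr)
    assume "\<not> j < p + length y''"
    moreover have "j < p + length y'' + q" using h(2) lc c(1) by simp
    ultimately have "c ! j = Wedge" using c(1) by (auto simp: nth_append)
    then show False using ci by simp
  qed
  define z where "z = y''[i - p := Vee, j - p := Wedge]"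
  have a: "a = c[i := Vee, j := Wedge]" using h by (auto intro!: nth_equalityI simp: nth_list_update)
  have "a = replicate p Vee @ z @ replicate q Wedge"
  proof -
    have "i - p < length y''" "j - p < length y''" using ip jp h(1) by auto
    then show ?thesis unfolding a c(1) z_def using ip jp h(1) by (simp add: list_update_append)
  qed
  moreover have "bruhat_step z y''" unfolding bruhat_step_def
  proof (intro exI conjI)
    show "i - p < j - p" "j - p < length z" using ip jp h(1) by (auto simp: z_def)
    show "z ! (i - p) = Vee" "z ! (j - p) = Wedge" using ip jp h(1) by (auto simp: z_def nth_list_update)
    have "y'' ! (i - p) = Wedge" "y'' ! (j - p) = Vee" using ci c(1) ip jp h(1) by (auto simp: nth_append split: if_splits)
    then show "y'' = z[i - p := Wedge, j - p := Vee]"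
      using ip jp h(1) by (auto intro!: nth_equalityI simp: z_def nth_list_update)
  qed
  ultimately show ?case using c(2) converse_rtranclp_into_rtranclp[of bruhat_step z y'' y] by blast
qed

lemma le_rev: "bruhat_le l m \<Longrightarrow> same_block m l \<and> (\<forall>v. count_list m v = count_list l v)"
  unfolding bruhat_le_def
proof (induction rule: rtranclp_induct)
  case base show ?case using sb_refl by simp
next
  case (step y z) then show ?case using sb_trans step_sb_rev step_count by metis
qed

theorem lemma4p1:
  fixes \<Lambda> \<Delta> :: "weight set" and l m :: weight
  assumes "is_block \<Lambda>"
    and "is_block \<Delta>"
    and "cl ` \<Lambda> \<subseteq> \<Delta>"
    and "l \<in> \<Delta> - cl ` \<Lambda>"
    and "bruhat_le l m"
  shows "m \<in> \<Delta> - cl ` \<Lambda>"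
proof -
  obtain x where x: "\<Lambda> = block_of x" using assms(1) is_block_def by blast
  obtain d where d: "\<Delta> = block_of d" using assms(2) is_block_def by blast
  have "m \<in> \<Delta>" using assms(4,5) d le_sb sb_trans by (auto simp: block_of_def)
  moreover have "m \<notin> cl ` \<Lambda>"
  proof
    assume "m \<in> cl ` \<Lambda>"
    then obtain y where y: "y \<in> \<Lambda>" "m = cl y" by blast
    obtain y' where y': "l = replicate (count_list y Wedge) Vee @ y' @ replicate (count_list y Vee) Wedge"
      "bruhat_le y' y" using chain[OF assms(5)] y(2) unfolding cl_def by blast
    have r: "same_block y y'" "\<forall>v. count_list y v = count_list y' v" using le_rev[OF y'(2)] by auto
    have "y' \<in> \<Lambda>" using y(1) r(1) x sb_trans by (auto simp: block_of_def)
    moreover have "l = cl y'" using y'(1) r(2) by (simp add: cl_def)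
    ultimately show False using assms(4) by blast
  qed
  ultimately show ?thesis by blast
qed

end
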